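(* Let $A\subset\mathcal{N}=\omega^\omega$, let $\mathcal{F}$ be a hereditary family of closed and discrete subsets of $A$, let $\{T_a : a\in A\}$ be an $(A,\mathcal{F})$-Reznichenko family of trees, $\mathcal{T}=\bigcup_{a\in A}T_a$, and let $R[\mathcal{F}]\subset 2^{\mathcal{T}}$ be the associated compact set. Then there exists a determining function (for $R[\mathcal{F}]\subset\mathbb{R}^{\mathcal{T}}$) $f:\mathcal{T}\to wf(A)\times\omega^{(\omega^{<\omega})}$.
   Context: A tree is a partially ordered set $(T,\leq)$ in which for each $t$ the set $\{s: s<t\}$ is well ordered and which has a minimum, the root. An immediate successor of $t$ is a node $s>t$ with no $r$ satisfying $t<r<s$. The $\alpha$-th level consists of the $t$ with $\{s:s<t\}$ of order type $\alpha$; the height is the least $\alpha$ with empty $\alpha$-th level. A segment is a set $S\subset T$ of pairwise comparable elements such that $t\leq r\leq s$ with $t,s\in S$ implies $r\in S$; it is initial if it contains the root. For a set $A$ with $|A|\leq\mathfrak{c}$ and a hereditary family $\mathcal{F}$ of subsets of $A$ (closed under subsets), an $(A,\mathcal{F})$-Reznichenko family of trees is a family $\{T_a:a\in A\}$ of trees such that: (1) each $T_a$ has height $\omega$ and every node has $\mathfrak{c}$ many immediate successors; (2) $T_a\cap A=\{a\}$ and $a$ is the root of $T_a$; (3) for every $t\in\bigcup_a T_a$, $\{a\in A: t\in T_a\}\in\mathcal{F}$; (4) for $a\neq b$ and segments $S\subset T_a$, $S'\subset T_b$, $|S\cap S'|\leq 1$; (5) for every $B\in\mathcal{F}$ and every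 disjoint family $\{S_b:b\in B\}$ with $S_b$ a finite initial segment of $T_b$, there are $\mathfrak{c}$ many $t$ that are simultaneously an immediate successor of $S_b$ in $T_b$ for all $b\in B$. $R[\mathcal{F}]\subset 2^{\mathcal{T}}$ is the family of all segments of all the trees $T_a$ (a compact set). A tree on $\omega$ is a set $T\subset\omega^{<\omega}$ closed under initial segments; $Tr\subset 2^{\omega^{<\omega}}$ is the compact metrizable space of all trees on $\omega$; a branch of $T$ is $a\in\omega^\omega$ with $a|n\in T$ for all $n$; $wf(A)\subset Tr$ is the set of trees on $\omega$ none of whose branches belongs to $A$ (with subspace topology), and $\omega^{(\omega^{<\omega})}$ carries the product topology. For an index set $\Gamma$, a compact $K\subset\mathbb{R}^\Gamma$ and a separable metrizable $D$, $f:\Gamma\to D$ is a determining function if for all $x\in K$, compact $C\subset D$ and $\varepsilon>0$, the set $\{\gamma\in f^{-1}(C): |x_\gamma|>\varepsilon\}$ is finite. *)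

theory Defs
  imports "HOL-Analysis.Analysis" "HOL-Library.Equipollence"
begin

definition strictly_below :: "('n \<Rightarrow> 'n \<Rightarrow> bool) \<Rightarrow> 'n \<Rightarrow> 'n \<Rightarrow> bool" where
  "strictly_below le s t \<longleftrightarrow> le s t \<and> s \<noteq> t"

definition preds :: "'n set \<Rightarrow> ('n \<Rightarrow> 'n \<Rightarrow> bool) \<Rightarrow> 'n \<Rightarrow> 'n set" where
  "preds T le t = {s \<in> T. strictly_below le s t}"

definition well_ordered_by :: "('n \<Rightarrow> 'n \<Rightarrow> bool) \<Rightarrow> 'n set \<Rightarrow> bool" where
  "well_ordered_by le P \<longleftrightarrow>
     (\<forall>x\<in>P. \<forall>y\<in>P. le x y \<or> le y x) \<and>
     (\<forall>Q. Q \<subseteq> P \<and> Q \<noteq> {} \<longrightarrow> (\<exists>m\<in>Q. \<forall>q\<in>Q. le m q))"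

definition is_root :: "'n set \<Rightarrow> ('n \<Rightarrow> 'n \<Rightarrow> bool) \<Rightarrow> 'n \<Rightarrow> bool" where
  "is_root T le r \<longleftrightarrow> r \<in> T \<and> (\<forall>t\<in>T. le r t)"

definition is_tree :: "'n set \<Rightarrow> ('n \<Rightarrow> 'n \<Rightarrow> bool) \<Rightarrow> bool" where
  "is_tree T le \<longleftrightarrow>
     (\<forall>t\<in>T. le t t) \<and>
     (\<forall>s\<in>T. \<forall>t\<in>T. le s t \<and> le t s \<longrightarrow> s = t) \<and>
     (\<forall>r\<in>T. \<forall>s\<in>T. \<forall>t\<in>T. le r s \<and> le s t \<longrightarrow> le r t) \<and>
     (\<exists>r. is_root T le r) \<and>
     (\<forall>t\<in>T. well_ordered_by le (preds T le t))"

text \<open>Height exactly omega: every node lies on a finite level (finitely many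
predecessors, so level omega is empty) and every finite level n is nonempty.\<close>

definition height_omega :: "'n set \<Rightarrow> ('n \<Rightarrow> 'n \<Rightarrow> bool) \<Rightarrow> bool" where
  "height_omega T le \<longleftrightarrow>
     (\<forall>t\<in>T. finite (preds T le t)) \<and>
     (\<forall>n::nat. \<exists>t\<in>T. card (preds T le t) = n)"

definition imm_succ :: "'n set \<Rightarrow> ('n \<Rightarrow> 'n \<Rightarrow> bool) \<Rightarrow> 'n \<Rightarrow> 'n \<Rightarrow> bool" where
  "imm_succ T le t s \<longleftrightarrow> s \<in> T \<and> t \<in> T \<and> strictly_below le t s \<and>
     \<not> (\<exists>r\<in>T. strictly_below le t r \<and> strictly_below le r s)"

definition segment :: "'n set \<Rightarrow> ('n \<Rightarrow> 'n \<Rightarrow> bool) \<Rightarrow> 'n set \<Rightarrow> bool" where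
  "segment T le S \<longleftrightarrow> S \<subseteq> T \<and>
     (\<forall>x\<in>S. \<forall>y\<in>S. le x y \<or> le y x) \<and>
     (\<forall>t\<in>S. \<forall>s\<in>S. \<forall>r\<in>T. le t r \<and> le r s \<longrightarrow> r \<in> S)"

definition initial_segment :: "'n set \<Rightarrow> ('n \<Rightarrow> 'n \<Rightarrow> bool) \<Rightarrow> 'n set \<Rightarrow> bool" where
  "initial_segment T le S \<longleftrightarrow> segment T le S \<and> (\<exists>r\<in>S. is_root T le r)"

definition imm_succ_seg :: "'n set \<Rightarrow> ('n \<Rightarrow> 'n \<Rightarrow> bool) \<Rightarrow> 'n set \<Rightarrow> 'n \<Rightarrow> bool" where
  "imm_succ_seg T le S t \<longleftrightarrow> (\<exists>m\<in>S. (\<forall>s\<in>S. le s m) \<and> imm_succ T le m t)"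

text \<open>The set A is a subset of the Baire space (nat \<Rightarrow> nat); the nodes of the trees
have an arbitrary type 'n and A is identified with a subset of the nodes via an
injection emb.\<close>

definition hereditary :: "'a set set \<Rightarrow> bool" where
  "hereditary F \<longleftrightarrow> (\<forall>B\<in>F. \<forall>C. C \<subseteq> B \<longrightarrow> C \<in> F)"

definition reznichenko_family ::
  "(nat \<Rightarrow> nat) set \<Rightarrow> (nat \<Rightarrow> nat) set set \<Rightarrow> ((nat \<Rightarrow> nat) \<Rightarrow> 'n)
   \<Rightarrow> ((nat \<Rightarrow> nat) \<Rightarrow> 'n set) \<Rightarrow> ((nat \<Rightarrow> nat) \<Rightarrow> 'n \<Rightarrow> 'n \<Rightarrow> bool) \<Rightarrow> bool" where
  "reznichenko_family A F emb T le \<longleftrightarrow>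
     \<comment> \<open>(1)\<close>
     (\<forall>a\<in>A. is_tree (T a) (le a) \<and> height_omega (T a) (le a) \<and>
        (\<forall>t\<in>T a. {s. imm_succ (T a) (le a) t s} \<approx> (UNIV :: real set))) \<and>
     \<comment> \<open>(2)\<close>
     (\<forall>a\<in>A. T a \<inter> emb ` A = {emb a} \<and> is_root (T a) (le a) (emb a)) \<and>
     \<comment> \<open>(3)\<close>
     (\<forall>t\<in>(\<Union>a\<in>A. T a). {a\<in>A. t \<in> T a} \<in> F) \<and>
     \<comment> \<open>(4)\<close>
     (\<forall>a\<in>A. \<forall>b\<in>A. a \<noteq> b \<longrightarrow> (\<forall>S S'. segment (T a) (le a) S \<and> segment (T b) (le b) S' \<longrightarrow>
        (\<forall>x\<in>S \<inter> S'. \<forall>y\<in>S \<inter> S'. x = y))) \<and>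
     \<comment> \<open>(5)\<close>
     (\<forall>B\<in>F. \<forall>S :: (nat \<Rightarrow> nat) \<Rightarrow> 'n set.
        (\<forall>b\<in>B. finite (S b) \<and> initial_segment (T b) (le b) (S b)) \<and>
        (\<forall>b\<in>B. \<forall>b'\<in>B. b \<noteq> b' \<longrightarrow> S b \<inter> S b' = {}) \<longrightarrow>
        {t\<in>(\<Union>a\<in>A. T a). \<forall>b\<in>B. imm_succ_seg (T b) (le b) (S b) t} \<approx> (UNIV :: real set))"

definition R_F :: "(nat \<Rightarrow> nat) set \<Rightarrow> ((nat \<Rightarrow> nat) \<Rightarrow> 'n set) \<Rightarrow> ((nat \<Rightarrow> nat) \<Rightarrow> 'n \<Rightarrow> 'n \<Rightarrow> bool) \<Rightarrow> 'n set set" where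
  "R_F A T le = {S. \<exists>a\<in>A. segment (T a) (le a) S}"

definition baire_top :: "(nat \<Rightarrow> nat) topology" where
  "baire_top = product_topology (\<lambda>_. discrete_topology (UNIV :: nat set)) UNIV"

definition closed_discrete_in :: "(nat \<Rightarrow> nat) set \<Rightarrow> (nat \<Rightarrow> nat) set \<Rightarrow> bool" where
  "closed_discrete_in A B \<longleftrightarrow> B \<subseteq> A \<and> closedin (subtopology baire_top A) B \<and>
     (\<forall>x\<in>B. \<exists>U. openin baire_top U \<and> U \<inter> B = {x})"

text \<open>A tree on omega is represented by its characteristic function
nat list \<Rightarrow> bool (an element of 2^(omega^{<omega})).\<close>

definition tree_on_omega :: "(nat list \<Rightarrow> bool) \<Rightarrow> bool" where
  "tree_on_omega T \<longleftrightarrow> (\<forall>s t. T (s @ t) \<longrightarrow> T s)"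

definition branch_of :: "(nat list \<Rightarrow> bool) \<Rightarrow> (nat \<Rightarrow> nat) \<Rightarrow> bool" where
  "branch_of T a \<longleftrightarrow> (\<forall>n. T (map a [0..<n]))"

definition wf_set :: "(nat \<Rightarrow> nat) set \<Rightarrow> (nat list \<Rightarrow> bool) set" where
  "wf_set A = {T. tree_on_omega T \<and> (\<forall>a\<in>A. \<not> branch_of T a)}"

definition cantor_top :: "(nat list \<Rightarrow> bool) topology" where
  "cantor_top = product_topology (\<lambda>_. discrete_topology (UNIV :: bool set)) UNIV"

definition omega_pow_top :: "(nat list \<Rightarrow> nat) topology" where
  "omega_pow_top = product_topology (\<lambda>_. discrete_topology (UNIV :: nat set)) UNIV"

definition D_top :: "(nat \<Rightarrow> nat) set \<Rightarrow> ((nat list \<Rightarrow> bool) \<times> (nat list \<Rightarrow> nat)) topology" where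
  "D_top A = prod_topology (subtopology cantor_top (wf_set A)) omega_pow_top"

definition determining_function ::
  "'g set \<Rightarrow> ('g \<Rightarrow> real) set \<Rightarrow> 'd topology \<Rightarrow> ('g \<Rightarrow> 'd) \<Rightarrow> bool" where
  "determining_function \<Gamma> K D f \<longleftrightarrow>
     f ` \<Gamma> \<subseteq> topspace D \<and>
     (\<forall>x\<in>K. \<forall>C. compactin D C \<longrightarrow> (\<forall>\<epsilon>>0. finite {\<gamma>\<in>\<Gamma>. f \<gamma> \<in> C \<and> \<bar>x \<gamma>\<bar> > \<epsilon>}))"

end

theory Submission
  imports Defs
begin

definition pfx :: "nat list \<Rightarrow> (nat \<Rightarrow> nat) \<Rightarrow> bool" where
  "pfx s b \<longleftrightarrow> map b [0..<length s] = s"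

lemma pfx_map: "pfx (map a [0..<n]) b \<longleftrightarrow> (\<forall>i<n. b i = a i)"
  unfolding pfx_def by (simp add: atLeast0LessThan lessThan_def)

lemma pfx_append: "pfx (s @ t) b \<Longrightarrow> pfx s b"
proof -
  assume "pfx (s @ t) b"
  then have "map b [0..<length s + length t] = s @ t" by (simp add: pfx_def)
  then have "take (length s) (map b [0..<length s + length t]) = take (length s) (s @ t)" by simp
  then show ?thesis by (simp add: pfx_def take_map)
qed
lemma baire_cyl:
  assumes "openin baire_top U" "x \<in> U"
  shows "\<exists>n. \<forall>y. (\<forall>i<n. y i = x i) \<longrightarrow> y \<in> U"
proof -
  obtain V where fin: "finite {i. V i \<noteq> UNIV}" and xV: "x \<in> Pi\<^sub>E UNIV V"
    and sub: "Pi\<^sub>E UNIV V \<subseteq> U"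
    using assms unfolding baire_top_def openin_product_topology_alt by fastforce
  obtain n where n: "{i. V i \<noteq> UNIV} \<subseteq> {..<n}" using finite_nat_bounded[OF fin] by blast
  have "y \<in> U" if "\<forall>i<n. y i = x i" for y
  proof -
    have "y \<in> Pi\<^sub>E UNIV V"
    proof (auto simp: PiE_def Pi_def)
      fix i show "y i \<in> V i"
      proof (cases "V i = UNIV")
        case False then have "i < n" using n by auto
        then show ?thesis using that xV by (auto simp: PiE_def Pi_def)
      qed auto
    qed
    then show ?thesis using sub by blast
  qed
  then show ?thesis by blast
qed

lemma W_wf:
  assumes "closed_discrete_in A B"
  shows "(\<lambda>s. \<exists>b1\<in>B. \<exists>b2\<in>B. b1 \<noteq> b2 \<and> pfx s b1 \<and> pfx s b2) \<in> wf_set A"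
proof -
  let ?W = "\<lambda>s. \<exists>b1\<in>B. \<exists>b2\<in>B. b1 \<noteq> b2 \<and> pfx s b1 \<and> pfx s b2"
  have tree: "tree_on_omega ?W"
    unfolding tree_on_omega_def using pfx_append by blast
  have top: "topspace baire_top = UNIV" by (simp add: baire_top_def)
  have nb: "\<not> branch_of ?W x" if xA: "x \<in> A" for x
  proof
    assume br: "branch_of ?W x"
    have ext: "\<exists>b1\<in>B. \<exists>b2\<in>B. b1 \<noteq> b2 \<and> (\<forall>i<n. b1 i = x i) \<and> (\<forall>i<n. b2 i = x i)" for n
      using br unfolding branch_of_def by (simp add: pfx_map)
    show False
    proof (cases "x \<in> B")
      case True
      then obtain U where U: "openin baire_top U" "U \<inter> B = {x}"
        using assms unfolding closed_discrete_in_def by blast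
      then have "x \<in> U" by auto
      then obtain n where n: "\<forall>y. (\<forall>i<n. y i = x i) \<longrightarrow> y \<in> U" using baire_cyl U(1) by blast
      obtain b1 b2 where "b1 \<in> B" "b2 \<in> B" "b1 \<noteq> b2" "\<forall>i<n. b1 i = x i" "\<forall>i<n. b2 i = x i"
        using ext[of n] by metis
      then have "b1 \<in> U" "b2 \<in> U" using n by auto
      then have "b1 = x" "b2 = x" using U(2) \<open>b1 \<in> B\<close> \<open>b2 \<in> B\<close> by auto
      then show False using \<open>b1 \<noteq> b2\<close> by simp
    next
      case False
      have "closedin (subtopology baire_top A) B" and BA: "B \<subseteq> A"
        using assms unfolding closed_discrete_in_def by auto
      then have "openin (subtopology baire_top A) (A - B)"
        by (simp add: closedin_def top)
      then obtain V where V: "openin baire_top V" "A - B = V \<inter> A"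
        by (auto simp: openin_subtopology)
      then have "x \<in> V" using xA False by auto
      then obtain n where n: "\<forall>y. (\<forall>i<n. y i = x i) \<longrightarrow> y \<in> V" using baire_cyl V(1) by blast
      obtain b1 b2 where "b1 \<in> B" "b2 \<in> B" "\<forall>i<n. b1 i = x i"
        using ext[of n] by metis
      then have "b1 \<in> V" using n by auto
      then have "b1 \<in> A - B" using V(2) BA \<open>b1 \<in> B\<close> by auto
      then show False using \<open>b1 \<in> B\<close> by simp
    qed
  qed
  show ?thesis using tree nb unfolding wf_set_def by auto
qed


lemma cpt_bound:
  assumes C: "compactin (D_top A) C" and aA: "a \<in> A"
  shows "\<exists>N. \<forall>p\<in>C. \<exists>n\<le>N. \<not> fst p (map a [0..<n]) \<and> snd p (map a [0..<n]) \<le> N"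
proof -
  define U where "U n = {W :: nat list \<Rightarrow> bool. \<not> W (map a [0..<n])}" for n
  have K1s: "compactin (subtopology cantor_top (wf_set A)) (fst ` C)"
    using image_compactin[OF C] continuous_map_fst unfolding D_top_def by blast
  then have K1: "compactin cantor_top (fst ` C)" and K1w: "fst ` C \<subseteq> wf_set A"
    by (auto simp: compactin_subtopology)
  have ctop: "topspace cantor_top = UNIV" by (simp add: cantor_top_def)
  have opn: "openin cantor_top (U n)" for n
  proof -
    have "openin cantor_top {x \<in> topspace cantor_top. x (map a [0..<n]) \<in> {False}}"
      unfolding cantor_top_def
      by (rule openin_continuous_map_preimage[OF continuous_map_product_projection]) auto
    then show ?thesis by (simp add: ctop U_def)
  qed
  have cov: "fst ` C \<subseteq> \<Union>(range U)"
  proof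
    fix W assume "W \<in> fst ` C"
    then have "W \<in> wf_set A" using K1w by blast
    then have "\<not> branch_of W a" using aA by (simp add: wf_set_def)
    then show "W \<in> \<Union>(range U)" by (auto simp: branch_of_def U_def)
  qed
  obtain G where G: "finite G" "G \<subseteq> range U" "fst ` C \<subseteq> \<Union>G"
    using K1 cov opn unfolding compactin_def by (metis imageE)
  obtain I where I: "finite I" "G = U ` I"
    using G by (meson finite_subset_image)
  define N1 where "N1 = Max (insert 0 I)"
  have N1: "\<forall>p\<in>C. \<exists>n\<le>N1. \<not> fst p (map a [0..<n])"
  proof
    fix p assume "p \<in> C"
    then obtain i where "i \<in> I" "fst p \<in> U i" using G(3) I(2) by blast
    moreover have "i \<le> N1" using \<open>i \<in> I\<close> I(1) by (simp add: N1_def)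
    ultimately show "\<exists>n\<le>N1. \<not> fst p (map a [0..<n])" by (auto simp: U_def)
  qed
  have K2: "compactin omega_pow_top (snd ` C)"
    using image_compactin[OF C] continuous_map_snd unfolding D_top_def by blast
  have fin: "finite ((\<lambda>g. g (map a [0..<n])) ` snd ` C)" for n
  proof -
    have "continuous_map omega_pow_top (discrete_topology UNIV) (\<lambda>g. g (map a [0..<n]))"
      unfolding omega_pow_top_def by (rule continuous_map_product_projection) simp
    then have "compactin (discrete_topology UNIV) ((\<lambda>g. g (map a [0..<n])) ` snd ` C)"
      by (rule image_compactin[OF K2])
    then show ?thesis by (simp add: compactin_discrete_topology)
  qed
  define M where "M = Max (insert 0 (\<Union>n\<le>N1. (\<lambda>g. g (map a [0..<n])) ` snd ` C))"
  have finU: "finite (insert 0 (\<Union>n\<le>N1. (\<lambda>g. g (map a [0..<n])) ` snd ` C))"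
    using fin by auto
  have "\<forall>p\<in>C. \<exists>n\<le>max N1 M. \<not> fst p (map a [0..<n]) \<and> snd p (map a [0..<n]) \<le> max N1 M"
  proof
    fix p assume p: "p \<in> C"
    then obtain n where n: "n \<le> N1" "\<not> fst p (map a [0..<n])" using N1 by blast
    have "snd p (map a [0..<n]) \<in> insert 0 (\<Union>n\<le>N1. (\<lambda>g. g (map a [0..<n])) ` snd ` C)"
      using n p by blast
    then have "snd p (map a [0..<n]) \<le> M" unfolding M_def using finU by (rule Max_ge[rotated])
    then show "\<exists>n'\<le>max N1 M. \<not> fst p (map a [0..<n']) \<and> snd p (map a [0..<n']) \<le> max N1 M"
      using n by (intro exI[of _ n]) auto
  qed
  then show ?thesis by blast
qed

lemma depth_inj:
  assumes tr: "is_tree T le" and ho: "height_omega T le" and sg: "segment T le S"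
  shows "inj_on (\<lambda>t. card (preds T le t)) S"
proof -
  have tr1: "\<forall>r\<in>T. \<forall>s\<in>T. \<forall>t\<in>T. le r s \<and> le s t \<longrightarrow> le r t"
    and tr2: "\<forall>s\<in>T. \<forall>t\<in>T. le s t \<and> le t s \<longrightarrow> s = t"
    using tr[unfolded is_tree_def] by (rule conjunct1[OF conjunct2[OF conjunct2]], rule conjunct1[OF conjunct2])
  have trans: "\<And>r s t. r \<in> T \<Longrightarrow> s \<in> T \<Longrightarrow> t \<in> T \<Longrightarrow> le r s \<Longrightarrow> le s t \<Longrightarrow> le r t"
    using tr1 by blast
  have antis: "\<And>s t. s \<in> T \<Longrightarrow> t \<in> T \<Longrightarrow> le s t \<Longrightarrow> le t s \<Longrightarrow> s = t"
    using tr2 by blast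
  have lt: "card (preds T le x) < card (preds T le y)"
    if "x \<in> S" "y \<in> S" "x \<noteq> y" "le x y" for x y
  proof -
    have ST: "S \<subseteq> T" using sg unfolding segment_def by blast
    have xT: "x \<in> T" and yT: "y \<in> T" using ST that by auto
    have "preds T le x \<subseteq> preds T le y"
    proof
      fix s assume "s \<in> preds T le x"
      then have sT: "s \<in> T" "le s x" "s \<noteq> x" by (auto simp: preds_def strictly_below_def)
      have "le s y" using trans[OF sT(1) xT yT sT(2) that(4)] .
      moreover have "s \<noteq> y"
      proof
        assume "s = y"
        then have "x = y" using antis[OF xT yT that(4)] sT(2) by simp
        then show False using that(3) by simp
      qed
      ultimately show "s \<in> preds T le y" using sT by (auto simp: preds_def strictly_below_def)
    qed
    moreover have "x \<in> preds T le y" "x \<notin> preds T le x"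
      using xT that by (auto simp: preds_def strictly_below_def)
    ultimately have "preds T le x \<subset> preds T le y" by blast
    moreover have "finite (preds T le y)" using ho yT by (simp add: height_omega_def)
    ultimately show ?thesis by (rule psubset_card_mono[rotated])
  qed
  show ?thesis
  proof (rule inj_onI)
    fix x y assume xy: "x \<in> S" "y \<in> S" "card (preds T le x) = card (preds T le y)"
    show "x = y"
    proof (rule ccontr)
      assume "x \<noteq> y"
      moreover have "\<forall>x\<in>S. \<forall>y\<in>S. le x y \<or> le y x" using sg unfolding segment_def by blast
      then have "le x y \<or> le y x" using xy by blast
      ultimately show False using lt[of x y] lt[of y x] xy by auto
    qed
  qed
qed


theorem theorem4p1:
  fixes A :: "(nat \<Rightarrow> nat) set"
    and F :: "(nat \<Rightarrow> nat) set set"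
    and emb :: "(nat \<Rightarrow> nat) \<Rightarrow> 'n"
    and T :: "(nat \<Rightarrow> nat) \<Rightarrow> 'n set"
    and le :: "(nat \<Rightarrow> nat) \<Rightarrow> 'n \<Rightarrow> 'n \<Rightarrow> bool"
  assumes "inj_on emb A"
    and "hereditary F"
    and "\<forall>B\<in>F. closed_discrete_in A B"
    and "reznichenko_family A F emb T le"
  shows "\<exists>f. determining_function (\<Union>a\<in>A. T a)
              ((\<lambda>S. indicator S) ` R_F A T le) (D_top A) f"
proof -
  note RF = assms(4)[unfolded reznichenko_family_def]
  have R1: "\<forall>a\<in>A. is_tree (T a) (le a) \<and> height_omega (T a) (le a)"
    using conjunct1[OF RF] by blast
  have R3: "\<forall>t\<in>(\<Union>a\<in>A. T a). {a\<in>A. t \<in> T a} \<in> F"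
    using conjunct1[OF conjunct2[OF conjunct2[OF RF]]] .
  define Bs where "Bs t = {b\<in>A. t \<in> T b}" for t
  define W where "W t = (\<lambda>s. \<exists>b1\<in>Bs t. \<exists>b2\<in>Bs t. b1 \<noteq> b2 \<and> pfx s b1 \<and> pfx s b2)" for t
  define g where "g t = (\<lambda>s. if (\<exists>!b. b \<in> Bs t \<and> pfx s b)
      then card (preds (T (THE b. b \<in> Bs t \<and> pfx s b)) (le (THE b. b \<in> Bs t \<and> pfx s b)) t)
      else 0)" for t
  define f where "f t = (W t, g t)" for t
  have top: "topspace (D_top A) = wf_set A \<times> UNIV"
    by (simp add: D_top_def cantor_top_def omega_pow_top_def)
  have "determining_function (\<Union>a\<in>A. T a) ((\<lambda>S. indicator S) ` R_F A T le) (D_top A) f"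
    unfolding determining_function_def
  proof (intro conjI ballI allI impI)
    show "f ` (\<Union>a\<in>A. T a) \<subseteq> topspace (D_top A)"
    proof
      fix p assume "p \<in> f ` (\<Union>a\<in>A. T a)"
      then obtain t where t: "t \<in> (\<Union>a\<in>A. T a)" "p = f t" by blast
      have "Bs t \<in> F" using R3 t(1) unfolding Bs_def by blast
      then have "closed_discrete_in A (Bs t)" using assms(3) by blast
      then have "W t \<in> wf_set A" unfolding W_def by (rule W_wf)
      then show "p \<in> topspace (D_top A)" using t(2) top by (simp add: f_def)
    qed
  next
    fix x :: "'n \<Rightarrow> real" and C and \<epsilon> :: real
    assume x: "x \<in> (\<lambda>S. indicator S) ` R_F A T le" and C: "compactin (D_top A) C" and e: "\<epsilon> > 0"
    then obtain S a where xS: "x = indicator S" and aA: "a \<in> A" and sg: "segment (T a) (le a) S"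
      unfolding R_F_def by blast
    obtain N where N: "\<forall>p\<in>C. \<exists>n\<le>N. \<not> fst p (map a [0..<n]) \<and> snd p (map a [0..<n]) \<le> N"
      using cpt_bound[OF C aA] by blast
    let ?d = "\<lambda>t. card (preds (T a) (le a) t)"
    have inj: "inj_on ?d S" using depth_inj R1 aA sg by blast
    have fin: "finite {t\<in>S. ?d t \<le> N}"
    proof (rule finite_imageD)
      show "finite (?d ` {t\<in>S. ?d t \<le> N})"
        by (rule finite_subset[of _ "{..N}"]) auto
      show "inj_on ?d {t\<in>S. ?d t \<le> N}" using inj by (rule inj_on_subset) auto
    qed
    have ST: "S \<subseteq> T a" using sg unfolding segment_def by blast
    have sub: "{\<gamma> \<in> \<Union>a\<in>A. T a. f \<gamma> \<in> C \<and> \<bar>x \<gamma>\<bar> > \<epsilon>} \<subseteq> {t\<in>S. ?d t \<le> N}"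
    proof
      fix t assume "t \<in> {\<gamma> \<in> \<Union>a\<in>A. T a. f \<gamma> \<in> C \<and> \<bar>x \<gamma>\<bar> > \<epsilon>}"
      then have fC: "f t \<in> C" and xt: "\<bar>x t\<bar> > \<epsilon>" by auto
      have tS: "t \<in> S"
      proof (rule ccontr)
        assume "t \<notin> S" then have "x t = 0" by (simp add: xS)
        then show False using xt e by simp
      qed
      then have aB: "a \<in> Bs t" using ST aA by (auto simp: Bs_def)
      obtain n where n: "\<not> W t (map a [0..<n])" "g t (map a [0..<n]) \<le> N"
        using N fC by (auto simp: f_def)
      have pa: "pfx (map a [0..<n]) a" by (simp add: pfx_map)
      have uniq: "b = a" if "b \<in> Bs t" "pfx (map a [0..<n]) b" for b
        using n(1) that aB pa unfolding W_def by blast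
      have ex1: "\<exists>!b. b \<in> Bs t \<and> pfx (map a [0..<n]) b" using aB pa uniq by blast
      have the: "(THE b. b \<in> Bs t \<and> pfx (map a [0..<n]) b) = a"
        using aB pa uniq by blast
      have "?d t \<le> N" using n(2) ex1 the by (simp add: g_def)
      then show "t \<in> {t\<in>S. ?d t \<le> N}" using tS by simp
    qed
    show "finite {\<gamma> \<in> \<Union>a\<in>A. T a. f \<gamma> \<in> C \<and> \<bar>x \<gamma>\<bar> > \<epsilon>}"
      using finite_subset[OF sub fin] .
  qed
  then show ?thesis by blast
qed

end
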